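(* Let $(V,\kappa,\varpi,\Theta)$ be a synergistic feedback quadruple relative to a compact set $\mathcal{A}$, with gap exceeding $\delta>0$, for the extended system, where $\kappa$ has the decomposition $\kappa(x,\theta)=\varsigma(x)+\Upsilon(x)\sigma(x,\theta)$, and suppose Assumption 1 holds with constant $c_\kappa>0$. Choose $0<\gamma_s<\delta/c_\kappa$ and $k_\eta>0$, and define $V_s,\kappa_s$ as below. Then $(V_s,\kappa_s,\varpi,\Theta)$ is a synergistic feedback quadruple relative to the set $\mathcal{A}_s=\{(x,\eta,\theta)\in\mathcal{X}_s\times\mathbb{R}^r:(x,\theta)\in\mathcal{A},\ \eta=\sigma(x,\theta)\}$ for the smooth extended system, with gap exceeding any $\delta_s\in(0,\delta-\gamma_sc_\kappa]$.
   Context: Let $\mathcal{X}\subseteq\mathbb{R}^n$ be closed and nonempty, and let $f:\mathcal{X}\to\mathbb{R}^n$, $g:\mathcal{X}\to\mathbb{R}^{n\times m}$ be smooth, defining the control system $\dot x=f(x)+g(x)u$. Let $r\ge 1$, let $\Theta\subset\mathbb{R}^r$ be finite and nonempty, and let $\varpi:\mathcal{X}\times\mathbb{R}^r\to\mathbb{R}^r$ be smooth. The extended system is $\frac{d}{dt}(x,\theta)=f_c(x,\theta)+g_c(x,\theta)u$ with $f_c(x,\theta)=(f(x),\varpi(x,\theta))$ and $g_c(x,\theta)=(g(x),0)$. General definitions (for any system $\dot z=\tilde f(z,\theta)+\tilde g(z,\theta)v$ on $\mathcal{Z}\times\mathbb{R}^r$, $\mathcal{Z}$ closed, with $\dot\theta$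 being the last block of the drift): for smooth $W:\mathcal{Z}\times\mathbb{R}^r\to\mathbb{R}_{\ge0}$ and feedback $k$, $\mu_{W,\Theta}(z,\theta)=W(z,\theta)-\min_{\bar\theta\in\Theta}W(z,\bar\theta)$; $\mathcal{E}_W=\{(z,\theta):\langle\nabla W,\tilde f+\tilde g k\rangle=0\}$ with $\nabla W$ the full gradient; $\Psi_W\subseteq\mathcal{E}_W$ is the largest subset of $\mathcal{E}_W$ that is weakly invariant (weakly forward and backward invariant) for the closed-loop flow $\dot z=\tilde f+\tilde gk$. Given compact $\mathcal{A}'$ and $\delta'>0$, $(W,k,\varpi,\Theta)$ is a synergistic feedback quadruple relative to $\mathcal{A}'$ for that system with gap exceeding $\delta'$ if (C1) every sublevel set $\{W\le\epsilon\}$, $\epsilon\ge0$, is compact; (C2) $W$ is positive definite with respect to $\mathcal{A}'$; (C3) $\langle\nabla W,\tilde f+\tilde gk\rangle\le0$ everywhere; (C4) $\inf_{\Psi_W\setminus\mathcal{A}'}\mu_{W,\Theta}>\delta'$. (For the extended system this is applied with $z=x$, $\tilde f=f_c$, $\tilde g=g_c$.) Decomposition: $\varsigma:\mathcal{X}\to\mathbb{R}^m$, $\Upsilon:\mathcal{X}\to\mathbb{R}^{m\times s}$, $\sigma:\mathcal{X}\times\mathbb{R}^r\to\mathbb{R}^s$ smooth with $\kappa(x,\theta)=\varsigma(x)+\Upsilon(x)\sigma(x,\theta)$; set $\bar\kappa(x,\eta)=\varsigma(x)+\Upsilon(x)\eta$ for $\eta\in\mathbb{R}^s$. Assumption 1: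 there is $c_\kappa>0$ with $\max_{\bar\theta\in\Theta}\|\sigma(x,\theta)-\sigma(x,\bar\theta)\|^2\le2c_\kappa$ for all $(x,\theta)\in\Psi_V\setminus\mathcal{A}$, where $\Psi_V$ is defined for the extended system with $W=V$, $k=\kappa$. Smooth extended system: state $x_s=(x,\eta)\in\mathcal{X}_s:=\mathcal{X}\times\mathbb{R}^s$ and $\theta\in\mathbb{R}^r$, with $\dot x=f(x)+g(x)\bar\kappa(x,\eta)$, $\dot\eta=u_s$, $\dot\theta=\varpi(x,\theta)$, i.e. drift $f_s=(f+g\bar\kappa,0,\varpi)$ and input matrix $g_s=(0,I_s,0)$. $V_s(x_s,\theta)=V(x,\theta)+\frac{\gamma_s}{2}\|\eta-\sigma(x,\theta)\|^2$, and $\kappa_s(x_s,\theta)=-k_\eta(\eta-\sigma(x,\theta))+\mathcal{D}_t\sigma(x,\theta)-\frac{1}{\gamma_s}\Upsilon(x)^\top g(x)^\top\nabla_xV(x,\theta)$, where $\mathcal{D}_t\sigma(x,\theta)=\mathcal{D}_x\sigma(x,\theta)(f(x)+g(x)\bar\kappa(x,\eta))+\mathcal{D}_\theta\sigma(x,\theta)\varpi(x,\theta)$ and $\mathcal{D}_x,\mathcal{D}_\theta$ denote Jacobians. *)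

theory Defs
  imports "HOL-Analysis.Analysis"
begin

fun iter_dderiv :: "'a list \<Rightarrow> ('a::real_normed_vector \<Rightarrow> 'b::real_normed_vector) \<Rightarrow> 'a \<Rightarrow> 'b" where
  "iter_dderiv [] f = f"
| "iter_dderiv (v # vs) f = (\<lambda>x. frechet_derivative (iter_dderiv vs f) (at x) v)"

definition smooth :: "('a::real_normed_vector \<Rightarrow> 'b::real_normed_vector) \<Rightarrow> bool" where
  "smooth f \<longleftrightarrow> (\<forall>vs x. iter_dderiv vs f differentiable (at x))"

definition closed_loop :: "('p \<Rightarrow> 'p::real_normed_vector) \<Rightarrow> ('p \<Rightarrow> 'v \<Rightarrow> 'p) \<Rightarrow> ('p \<Rightarrow> 'v) \<Rightarrow> 'p \<Rightarrow> 'p" where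
  "closed_loop ft gt k p = ft p + gt p (k p)"

definition flow_solution_on :: "'p set \<Rightarrow> ('p \<Rightarrow> 'p::real_normed_vector) \<Rightarrow> (real \<Rightarrow> 'p) \<Rightarrow> real \<Rightarrow> bool" where
  "flow_solution_on D F \<phi> T \<longleftrightarrow> 0 \<le> T \<and>
     (\<forall>t\<in>{0..T}. \<phi> t \<in> D \<and> (\<phi> has_vector_derivative F (\<phi> t)) (at t within {0..T}))"

definition complete_solution :: "'p set \<Rightarrow> ('p \<Rightarrow> 'p::real_normed_vector) \<Rightarrow> (real \<Rightarrow> 'p) \<Rightarrow> bool" where
  "complete_solution D F \<phi> \<longleftrightarrow>
     (\<forall>t\<in>{0..}. \<phi> t \<in> D \<and> (\<phi> has_vector_derivative F (\<phi> t)) (at t within {0..}))"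

definition weakly_forward_invariant :: "'p set \<Rightarrow> ('p \<Rightarrow> 'p::real_normed_vector) \<Rightarrow> 'p set \<Rightarrow> bool" where
  "weakly_forward_invariant D F S \<longleftrightarrow>
     (\<forall>\<xi>\<in>S. \<exists>\<phi>. \<phi> 0 = \<xi> \<and> complete_solution D F \<phi> \<and> (\<forall>t\<in>{0..}. \<phi> t \<in> S))"

definition weakly_backward_invariant :: "'p set \<Rightarrow> ('p \<Rightarrow> 'p::real_normed_vector) \<Rightarrow> 'p set \<Rightarrow> bool" where
  "weakly_backward_invariant D F S \<longleftrightarrow>
     (\<forall>q\<in>S. \<forall>N>0. \<exists>\<xi>0\<in>S. \<exists>\<phi> T. \<phi> 0 = \<xi>0 \<and> N \<le> T \<and> flow_solution_on D F \<phi> T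
         \<and> \<phi> T = q \<and> (\<forall>t\<in>{0..T}. \<phi> t \<in> S))"

definition weakly_invariant :: "'p set \<Rightarrow> ('p \<Rightarrow> 'p::real_normed_vector) \<Rightarrow> 'p set \<Rightarrow> bool" where
  "weakly_invariant D F S \<longleftrightarrow> weakly_forward_invariant D F S \<and> weakly_backward_invariant D F S"

definition lie_W :: "('z \<times> 'r \<Rightarrow> real) \<Rightarrow> ('z \<times> 'r \<Rightarrow> 'z \<times> 'r) \<Rightarrow> 'z::real_normed_vector \<times> 'r::real_normed_vector \<Rightarrow> real" where
  "lie_W W F p = frechet_derivative W (at p) (F p)"

definition mu_W :: "('z \<times> 'r \<Rightarrow> real) \<Rightarrow> 'r set \<Rightarrow> 'z \<times> 'r \<Rightarrow> real" where
  "mu_W W \<Theta> p = W p - Min ((\<lambda>\<theta>b. W (fst p, \<theta>b)) ` \<Theta>)"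

definition E_W :: "'z set \<Rightarrow> ('z \<times> 'r \<Rightarrow> 'z \<times> 'r) \<Rightarrow> ('z \<times> 'r \<Rightarrow> 'v \<Rightarrow> 'z \<times> 'r) \<Rightarrow>
    ('z \<times> 'r \<Rightarrow> real) \<Rightarrow> ('z \<times> 'r \<Rightarrow> 'v) \<Rightarrow> ('z::real_normed_vector \<times> 'r::real_normed_vector) set" where
  "E_W Z ft gt W k = {p \<in> Z \<times> UNIV. lie_W W (closed_loop ft gt k) p = 0}"

text \<open>Largest weakly invariant subset of E_W (union of all weakly invariant subsets).\<close>
definition Psi_W :: "'z set \<Rightarrow> ('z \<times> 'r \<Rightarrow> 'z \<times> 'r) \<Rightarrow> ('z \<times> 'r \<Rightarrow> 'v \<Rightarrow> 'z \<times> 'r) \<Rightarrow>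
    ('z \<times> 'r \<Rightarrow> real) \<Rightarrow> ('z \<times> 'r \<Rightarrow> 'v) \<Rightarrow> ('z::real_normed_vector \<times> 'r::real_normed_vector) set" where
  "Psi_W Z ft gt W k = \<Union>{S. S \<subseteq> E_W Z ft gt W k \<and> weakly_invariant (Z \<times> UNIV) (closed_loop ft gt k) S}"

definition synergistic_quadruple ::
  "'z set \<Rightarrow> ('z \<times> 'r \<Rightarrow> 'z \<times> 'r) \<Rightarrow> ('z \<times> 'r \<Rightarrow> 'v \<Rightarrow> 'z \<times> 'r) \<Rightarrow>
   ('z \<times> 'r \<Rightarrow> real) \<Rightarrow> ('z \<times> 'r \<Rightarrow> 'v) \<Rightarrow> 'r set \<Rightarrow>
   ('z::real_normed_vector \<times> 'r::real_normed_vector) set \<Rightarrow> real \<Rightarrow> bool" where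
  "synergistic_quadruple Z ft gt W k \<Theta> A' \<delta>' \<longleftrightarrow>
     smooth W \<and> (\<forall>p\<in>Z \<times> UNIV. 0 \<le> W p) \<and> compact A' \<and>
     \<comment> \<open>(C1)\<close> (\<forall>\<epsilon>\<ge>0. compact {p \<in> Z \<times> UNIV. W p \<le> \<epsilon>}) \<and>
     \<comment> \<open>(C2)\<close> A' \<subseteq> Z \<times> UNIV \<and> (\<forall>p\<in>Z \<times> UNIV. W p = 0 \<longleftrightarrow> p \<in> A') \<and>
     \<comment> \<open>(C3)\<close> (\<forall>p\<in>Z \<times> UNIV. lie_W W (closed_loop ft gt k) p \<le> 0) \<and>
     \<comment> \<open>(C4): infimum (+infinity on the empty set) exceeds delta'\<close>
       (\<exists>c>\<delta>'. \<forall>p\<in>Psi_W Z ft gt W k - A'. c \<le> mu_W W \<Theta> p)"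

definition f_c :: "(real^'n \<Rightarrow> real^'n) \<Rightarrow> ((real^'n) \<times> (real^'r) \<Rightarrow> real^'r) \<Rightarrow>
    (real^'n) \<times> (real^'r) \<Rightarrow> (real^'n) \<times> (real^'r)" where
  "f_c f \<omega> p = (f (fst p), \<omega> p)"

definition g_c :: "(real^'n \<Rightarrow> real^'m^'n) \<Rightarrow> (real^'n) \<times> (real^'r) \<Rightarrow> real^'m \<Rightarrow> (real^'n) \<times> (real^'r)" where
  "g_c g p u = (g (fst p) *v u, 0)"

definition kappa_dec :: "(real^'n \<Rightarrow> real^'m) \<Rightarrow> (real^'n \<Rightarrow> real^'s^'m) \<Rightarrow>
    ((real^'n) \<times> (real^'r) \<Rightarrow> real^'s) \<Rightarrow> (real^'n) \<times> (real^'r) \<Rightarrow> real^'m" where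
  "kappa_dec vs Ups sig p = vs (fst p) + Ups (fst p) *v sig p"

definition kappa_bar :: "(real^'n \<Rightarrow> real^'m) \<Rightarrow> (real^'n \<Rightarrow> real^'s^'m) \<Rightarrow> real^'n \<Rightarrow> real^'s \<Rightarrow> real^'m" where
  "kappa_bar vs Ups x \<eta> = vs x + Ups x *v \<eta>"

definition f_s :: "(real^'n \<Rightarrow> real^'n) \<Rightarrow> (real^'n \<Rightarrow> real^'m^'n) \<Rightarrow> ((real^'n) \<times> (real^'r) \<Rightarrow> real^'r) \<Rightarrow>
    (real^'n \<Rightarrow> real^'m) \<Rightarrow> (real^'n \<Rightarrow> real^'s^'m) \<Rightarrow>
    ((real^'n) \<times> (real^'s)) \<times> (real^'r) \<Rightarrow> ((real^'n) \<times> (real^'s)) \<times> (real^'r)" where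
  "f_s f g \<omega> vs Ups q = (case q of ((x, \<eta>), \<theta>) \<Rightarrow>
      ((f x + g x *v kappa_bar vs Ups x \<eta>, 0), \<omega> (x, \<theta>)))"

definition g_s :: "((real^'n) \<times> (real^'s)) \<times> (real^'r) \<Rightarrow> real^'s \<Rightarrow> ((real^'n) \<times> (real^'s)) \<times> (real^'r)" where
  "g_s q us = ((0, us), 0)"

definition grad_x :: "((real^'n) \<times> (real^'r) \<Rightarrow> real) \<Rightarrow> real^'n \<Rightarrow> real^'r \<Rightarrow> real^'n" where
  "grad_x V x \<theta> = (\<chi> i. frechet_derivative (\<lambda>y. V (y, \<theta>)) (at x) (axis i 1))"

definition V_s :: "((real^'n) \<times> (real^'r) \<Rightarrow> real) \<Rightarrow> ((real^'n) \<times> (real^'r) \<Rightarrow> real^'s) \<Rightarrow> real \<Rightarrow>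
    ((real^'n) \<times> (real^'s)) \<times> (real^'r) \<Rightarrow> real" where
  "V_s V sig \<gamma>s q = (case q of ((x, \<eta>), \<theta>) \<Rightarrow>
      V (x, \<theta>) + \<gamma>s / 2 * (norm (\<eta> - sig (x, \<theta>)))\<^sup>2)"

text \<open>D_t sigma = D_x sigma (f + g kappa_bar) + D_theta sigma varpi, i.e. the full Jacobian of sigma
  applied to the vector (f + g kappa_bar, varpi).\<close>
definition Dt_sigma :: "(real^'n \<Rightarrow> real^'n) \<Rightarrow> (real^'n \<Rightarrow> real^'m^'n) \<Rightarrow> ((real^'n) \<times> (real^'r) \<Rightarrow> real^'r) \<Rightarrow>
    (real^'n \<Rightarrow> real^'m) \<Rightarrow> (real^'n \<Rightarrow> real^'s^'m) \<Rightarrow> ((real^'n) \<times> (real^'r) \<Rightarrow> real^'s) \<Rightarrow>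
    real^'n \<Rightarrow> real^'s \<Rightarrow> real^'r \<Rightarrow> real^'s" where
  "Dt_sigma f g \<omega> vs Ups sig x \<eta> \<theta> =
     frechet_derivative sig (at (x, \<theta>)) (f x + g x *v kappa_bar vs Ups x \<eta>, \<omega> (x, \<theta>))"

definition kappa_s :: "(real^'n \<Rightarrow> real^'n) \<Rightarrow> (real^'n \<Rightarrow> real^'m^'n) \<Rightarrow> ((real^'n) \<times> (real^'r) \<Rightarrow> real^'r) \<Rightarrow>
    (real^'n \<Rightarrow> real^'m) \<Rightarrow> (real^'n \<Rightarrow> real^'s^'m) \<Rightarrow> ((real^'n) \<times> (real^'r) \<Rightarrow> real^'s) \<Rightarrow>
    ((real^'n) \<times> (real^'r) \<Rightarrow> real) \<Rightarrow> real \<Rightarrow> real \<Rightarrow>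
    ((real^'n) \<times> (real^'s)) \<times> (real^'r) \<Rightarrow> real^'s" where
  "kappa_s f g \<omega> vs Ups sig V \<gamma>s k\<eta> q = (case q of ((x, \<eta>), \<theta>) \<Rightarrow>
      - (k\<eta> *\<^sub>R (\<eta> - sig (x, \<theta>)))
      + Dt_sigma f g \<omega> vs Ups sig x \<eta> \<theta>
      - (1 / \<gamma>s) *\<^sub>R (transpose (Ups x) *v (transpose (g x) *v grad_x V x \<theta>)))"

definition A_s :: "((real^'n) \<times> (real^'r)) set \<Rightarrow> ((real^'n) \<times> (real^'r) \<Rightarrow> real^'s) \<Rightarrow>
    (((real^'n) \<times> (real^'s)) \<times> (real^'r)) set" where
  "A_s A sig = {((x, \<eta>), \<theta>). (x, \<theta>) \<in> A \<and> \<eta> = sig (x, \<theta>)}"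

end

theory Submission
  imports Defs
begin

lemma iter_dderiv_snoc:
  "iter_dderiv (vs @ [v]) f = iter_dderiv vs (\<lambda>x. frechet_derivative f (at x) v)"
  by (induction vs) auto

lemma smooth_coinduct:
  assumes F: "\<And>h x. h \<in> F \<Longrightarrow> h differentiable (at x)"
    and D: "\<And>h v. h \<in> F \<Longrightarrow> (\<lambda>x. frechet_derivative h (at x) v) \<in> F"
    and f: "f \<in> F"
  shows "smooth f"
proof -
  have "\<forall>h\<in>F. \<forall>x. iter_dderiv vs h differentiable (at x)" for vs
  proof (induction vs rule: rev_induct)
    case Nil then show ?case using F by simp
  next
    case (snoc v vs) then show ?case using D by (simp add: iter_dderiv_snoc)
  qed
  then show ?thesis using f unfolding smooth_def by blast
qed

lemma smooth_diff: "smooth f \<Longrightarrow> f differentiable (at x)"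
proof -
  assume "smooth f"
  then have "iter_dderiv [] f differentiable (at x)" unfolding smooth_def by blast
  then show ?thesis by simp
qed

lemma smooth_D: "smooth f \<Longrightarrow> smooth (\<lambda>x. frechet_derivative f (at x) v)"
proof -
  assume "smooth f"
  then have "iter_dderiv (vs @ [v]) f differentiable (at x)" for vs x unfolding smooth_def by blast
  then show ?thesis unfolding smooth_def iter_dderiv_snoc by blast
qed

lemma smooth_hasD: "smooth f \<Longrightarrow> (f has_derivative frechet_derivative f (at x)) (at x)"
  using smooth_diff frechet_derivative_works by blast

lemma smooth_const: "smooth (\<lambda>x. c)"
  by (rule smooth_coinduct[where F="range (\<lambda>c. \<lambda>x. c)"]) auto

lemma smooth_linear: assumes "bounded_linear L" shows "smooth L"
proof (rule smooth_coinduct[where F="{h. bounded_linear h} \<union> range (\<lambda>c. \<lambda>x. c)"])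
  fix h x assume "h \<in> {h. bounded_linear h} \<union> range (\<lambda>c. \<lambda>x. c)"
  then show "h differentiable (at x)"
    by (auto intro: bounded_linear_imp_differentiable)
next
  fix h v assume "h \<in> {h. bounded_linear h} \<union> range (\<lambda>c. \<lambda>x. c)"
  then show "(\<lambda>x. frechet_derivative h (at x) v) \<in> {h. bounded_linear h} \<union> range (\<lambda>c. \<lambda>x. c)"
  proof
    assume "h \<in> {h. bounded_linear h}"
    then have hb: "bounded_linear h" by simp
    have "\<And>x. frechet_derivative h (at x) = h"
      by (rule frechet_derivative_at[OF bounded_linear_imp_has_derivative[OF hb], symmetric])
    then show ?thesis by auto
  next
    assume "h \<in> range (\<lambda>c. \<lambda>x. c)"
    then show ?thesis by auto
  qed
qed (use assms in auto)

lemma smooth_pair: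
  assumes "smooth f" "smooth g" shows "smooth (\<lambda>x. (f x, g x))"
proof (rule smooth_coinduct[where F="{h. \<exists>f g. smooth f \<and> smooth g \<and> h = (\<lambda>x. (f x, g x))}"])
  fix h x assume "h \<in> {h. \<exists>f g. smooth f \<and> smooth g \<and> h = (\<lambda>x. (f x, g x))}"
  then obtain f g where "smooth f" "smooth g" "h = (\<lambda>x. (f x, g x))" by auto
  then show "h differentiable (at x)"
    using smooth_diff[of f x] smooth_diff[of g x] by (auto intro!: differentiable_Pair)
next
  fix h v assume "h \<in> {h. \<exists>f g. smooth f \<and> smooth g \<and> h = (\<lambda>x. (f x, g x))}"
  then obtain f g where fg: "smooth f" "smooth g" "h = (\<lambda>x. (f x, g x))" by auto
  have "frechet_derivative h (at x) = (\<lambda>u. (frechet_derivative f (at x) u, frechet_derivative g (at x) u))" for x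
    by (rule frechet_derivative_at[symmetric]) (use smooth_hasD[OF fg(1)] smooth_hasD[OF fg(2)] fg(3) in \<open>auto intro!: has_derivative_Pair\<close>)
  then show "(\<lambda>x. frechet_derivative h (at x) v) \<in> {h. \<exists>f g. smooth f \<and> smooth g \<and> h = (\<lambda>x. (f x, g x))}"
    using fg smooth_D[OF fg(1), of v] smooth_D[OF fg(2), of v] by auto
qed (use assms in auto)

lemma smooth_outer:
  assumes "smooth f" "bounded_linear L" shows "smooth (\<lambda>x. L (f x))"
proof (rule smooth_coinduct[where F="{h. \<exists>f. smooth f \<and> h = (\<lambda>x. L (f x))}"])
  fix h x assume "h \<in> {h. \<exists>f. smooth f \<and> h = (\<lambda>x. L (f x))}"
  then obtain f where "smooth f" "h = (\<lambda>x. L (f x))" by auto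
  then show "h differentiable (at x)"
    unfolding differentiable_def
    using bounded_linear.has_derivative[OF assms(2) smooth_hasD[of f x]] by blast
next
  fix h v assume "h \<in> {h. \<exists>f. smooth f \<and> h = (\<lambda>x. L (f x))}"
  then obtain f where fg: "smooth f" "h = (\<lambda>x. L (f x))" by auto
  have "frechet_derivative h (at x) = (\<lambda>u. L (frechet_derivative f (at x) u))" for x
    unfolding fg(2) by (rule frechet_derivative_at[symmetric]) (rule bounded_linear.has_derivative[OF assms(2) smooth_hasD[OF fg(1)]])
  then have "(\<lambda>x. frechet_derivative h (at x) v) = (\<lambda>x. L ((\<lambda>x. frechet_derivative f (at x) v) x))" by simp
  then show "(\<lambda>x. frechet_derivative h (at x) v) \<in> {h. \<exists>f. smooth f \<and> h = (\<lambda>x. L (f x))}"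
    using smooth_D[OF fg(1), of v] by blast
qed (use assms in auto)

lemma smooth_inner_comp:
  assumes "smooth f" "bounded_linear L" shows "smooth (\<lambda>x. f (L x))"
proof (rule smooth_coinduct[where F="{h. \<exists>f. smooth f \<and> h = (\<lambda>x. f (L x))}"])
  fix h x assume "h \<in> {h. \<exists>f. smooth f \<and> h = (\<lambda>x. f (L x))}"
  then obtain f where "smooth f" "h = (\<lambda>x. f (L x))" by auto
  then show "h differentiable (at x)"
    unfolding differentiable_def
    using diff_chain_at[OF bounded_linear_imp_has_derivative[OF assms(2)] smooth_hasD[of f "L x"]]
    by (auto simp: o_def)
next
  fix h v assume "h \<in> {h. \<exists>f. smooth f \<and> h = (\<lambda>x. f (L x))}"
  then obtain f where fg: "smooth f" "h = (\<lambda>x. f (L x))" by auto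
  have "frechet_derivative h (at x) = (\<lambda>u. frechet_derivative f (at (L x)) (L u))" for x
  proof (rule frechet_derivative_at[symmetric])
    have "((\<lambda>x. f (L x)) has_derivative (frechet_derivative f (at (L x)) \<circ> L)) (at x)"
      using diff_chain_at[OF bounded_linear_imp_has_derivative[OF assms(2)] smooth_hasD[OF fg(1)]]
      by (simp add: o_def)
    then show "(h has_derivative (\<lambda>u. frechet_derivative f (at (L x)) (L u))) (at x)"
      using fg by (simp add: o_def)
  qed
  then have "(\<lambda>x. frechet_derivative h (at x) v) = (\<lambda>x. (\<lambda>y. frechet_derivative f (at y) (L v)) (L x))" by simp
  then show "(\<lambda>x. frechet_derivative h (at x) v) \<in> {h. \<exists>f. smooth f \<and> h = (\<lambda>x. f (L x))}"
    using smooth_D[OF fg(1), of "L v"] by blast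
qed (use assms in auto)

definition prodsum :: "(('a \<Rightarrow> 'b::real_inner) \<times> ('a \<Rightarrow> 'b)) list \<Rightarrow> 'a \<Rightarrow> real" where
  "prodsum l x = (\<Sum>p\<leftarrow>l. fst p x \<bullet> snd p x)"

definition dlist :: "'c \<Rightarrow> (('c::real_normed_vector \<Rightarrow> 'b::real_inner) \<times> ('c \<Rightarrow> 'b)) list \<Rightarrow> (('c \<Rightarrow> 'b) \<times> ('c \<Rightarrow> 'b)) list" where
  "dlist v l = concat (map (\<lambda>p. [(\<lambda>x. frechet_derivative (fst p) (at x) v, snd p), (fst p, \<lambda>x. frechet_derivative (snd p) (at x) v)]) l)"

lemma prodsum_hasD:
  assumes "\<forall>p\<in>set l. smooth (fst p) \<and> smooth (snd p)"
  shows "(prodsum l has_derivative (\<lambda>u. prodsum (dlist u l) x)) (at x)"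
  using assms
proof (induction l)
  case Nil then show ?case by (simp add: prodsum_def dlist_def)
next
  case (Cons p l)
  have sp: "smooth (fst p)" "smooth (snd p)" using Cons.prems by auto
  have ih: "\<forall>p\<in>set l. smooth (fst p) \<and> smooth (snd p)" using Cons.prems by auto
  have a: "((\<lambda>x. fst p x \<bullet> snd p x) has_derivative
     (\<lambda>u. fst p x \<bullet> frechet_derivative (snd p) (at x) u + frechet_derivative (fst p) (at x) u \<bullet> snd p x)) (at x)"
    using has_derivative_inner[OF smooth_hasD[OF sp(1)] smooth_hasD[OF sp(2)]] .
  have eq: "prodsum (p#l) = (\<lambda>x. fst p x \<bullet> snd p x + prodsum l x)" by (simp add: prodsum_def fun_eq_iff)
  have eq2: "prodsum (dlist u (p#l)) x = (fst p x \<bullet> frechet_derivative (snd p) (at x) u + frechet_derivative (fst p) (at x) u \<bullet> snd p x) + prodsum (dlist u l) x" for u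
    by (simp add: prodsum_def dlist_def algebra_simps)
  have "(prodsum (p # l) has_derivative
     (\<lambda>u. (fst p x \<bullet> frechet_derivative (snd p) (at x) u + frechet_derivative (fst p) (at x) u \<bullet> snd p x) + prodsum (dlist u l) x)) (at x)"
    unfolding eq by (rule has_derivative_add[OF a Cons.IH[OF ih]])
  then show ?case by (simp only: eq2)
qed

lemma smooth_inner:
  fixes f g :: "'a::real_normed_vector \<Rightarrow> 'b::real_inner"
  assumes "smooth f" "smooth g" shows "smooth (\<lambda>x. f x \<bullet> g x)"
proof -
  let ?F = "{h. \<exists>c l. smooth c \<and> (\<forall>p\<in>set l. smooth (fst p) \<and> smooth (snd p)) \<and> h = (\<lambda>x. c x + prodsum (l::(('a \<Rightarrow> 'b) \<times> ('a \<Rightarrow> 'b)) list) x)}"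
  show ?thesis
  proof (rule smooth_coinduct[where F="?F"])
    fix h x assume "h \<in> ?F"
    then obtain c and l :: "(('a \<Rightarrow> 'b) \<times> ('a \<Rightarrow> 'b)) list" where cl: "smooth c" "\<forall>p\<in>set l. smooth (fst p) \<and> smooth (snd p)" "h = (\<lambda>x. c x + prodsum l x)" by auto
    show "h differentiable (at x)" unfolding cl(3) differentiable_def
      using has_derivative_add[OF smooth_hasD[OF cl(1)] prodsum_hasD[OF cl(2)]] by blast
  next
    fix h v assume "h \<in> ?F"
    then obtain c and l :: "(('a \<Rightarrow> 'b) \<times> ('a \<Rightarrow> 'b)) list" where cl: "smooth c" "\<forall>p\<in>set l. smooth (fst p) \<and> smooth (snd p)" "h = (\<lambda>x. c x + prodsum l x)" by auto
    have fd: "frechet_derivative h (at x) = (\<lambda>u. frechet_derivative c (at x) u + prodsum (dlist u l) x)" for x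
      unfolding cl(3)
      by (rule frechet_derivative_at[symmetric]) (rule has_derivative_add[OF smooth_hasD[OF cl(1)] prodsum_hasD[OF cl(2)]])
    have sl: "\<forall>p\<in>set (dlist v l). smooth (fst p) \<and> smooth (snd p)"
    proof
      fix p assume "p \<in> set (dlist v l)"
      then have "p \<in> (\<Union>q\<in>set l. set [(\<lambda>x. frechet_derivative (fst q) (at x) v, snd q), (fst q, \<lambda>x. frechet_derivative (snd q) (at x) v)])"
        unfolding dlist_def set_concat set_map by (simp only: image_image)
      then obtain q where q1: "q \<in> set l" and "p \<in> set [(\<lambda>x. frechet_derivative (fst q) (at x) v, snd q), (fst q, \<lambda>x. frechet_derivative (snd q) (at x) v)]"
        by (rule UN_E)
      then have q2: "p = (\<lambda>x. frechet_derivative (fst q) (at x) v, snd q) \<or> p = (fst q, \<lambda>x. frechet_derivative (snd q) (at x) v)"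
        by (simp only: list.set insert_iff empty_iff) simp
      note q = q1 q2
      have sq: "smooth (fst q) \<and> smooth (snd q)" by (rule bspec[OF cl(2) q(1)])
      from q(2) show "smooth (fst p) \<and> smooth (snd p)"
      proof (elim disjE)
        assume "p = (\<lambda>x. frechet_derivative (fst q) (at x) v, snd q)"
        then show ?thesis using sq smooth_D[of "fst q" v] by simp
      next
        assume "p = (fst q, \<lambda>x. frechet_derivative (snd q) (at x) v)"
        then show ?thesis using sq smooth_D[of "snd q" v] by simp
      qed
    qed
    have eqh: "(\<lambda>x. frechet_derivative h (at x) v) = (\<lambda>x. (\<lambda>x. frechet_derivative c (at x) v) x + prodsum (dlist v l) x)"
      by (rule ext) (simp only: fd)
    show "(\<lambda>x. frechet_derivative h (at x) v) \<in> ?F"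
      unfolding eqh
      apply (rule CollectI)
      apply (rule exI[of _ "\<lambda>x. frechet_derivative c (at x) v"], rule exI[of _ "dlist v l"])
      apply (rule conjI, rule smooth_D[OF cl(1)])
      apply (rule conjI, rule sl)
      by (rule refl)
  next
    show "(\<lambda>x. f x \<bullet> g x) \<in> ?F"
      apply (rule CollectI)
      apply (rule exI[of _ "\<lambda>x. 0"], rule exI[of _ "[(f, g)]"])
      using assms by (simp add: smooth_const prodsum_def)
  qed
qed

lemma bl_pi: "bounded_linear (\<lambda>q::(('a::real_normed_vector \<times> 'b::real_normed_vector) \<times> 'c::real_normed_vector). (fst (fst q), snd q))"
  by (intro bounded_linear_Pair bounded_linear_compose[OF bounded_linear_fst bounded_linear_fst] bounded_linear_snd)

lemma bl_eta: "bounded_linear (\<lambda>q::(('a::real_normed_vector \<times> 'b::real_normed_vector) \<times> 'c::real_normed_vector). snd (fst q))"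
  by (intro bounded_linear_compose[OF bounded_linear_snd bounded_linear_fst])

lemma Vs_eq: "V_s V \<sigma> \<gamma>s = (\<lambda>q. V (fst (fst q), snd q) + (\<gamma>s/2) * ((snd (fst q) - \<sigma> (fst (fst q), snd q)) \<bullet> (snd (fst q) - \<sigma> (fst (fst q), snd q))))"
  by (auto simp: fun_eq_iff V_s_def power2_norm_eq_inner split: prod.splits)

lemma smooth_Vs:
  fixes V :: "(real^'n) \<times> (real^'r) \<Rightarrow> real" and \<sigma> :: "(real^'n) \<times> (real^'r) \<Rightarrow> real^'s"
  assumes sV: "smooth V" and s\<sigma>: "smooth \<sigma>"
  shows "smooth (V_s V \<sigma> \<gamma>s)"
proof -
  let ?\<pi> = "\<lambda>q::((real^'n) \<times> (real^'s)) \<times> (real^'r). (fst (fst q), snd q)"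
  have h1: "smooth (\<lambda>q. V (?\<pi> q))" by (rule smooth_inner_comp[OF sV bl_pi])
  have h\<eta>: "smooth (\<lambda>q::((real^'n) \<times> (real^'s)) \<times> (real^'r). snd (fst q))" by (rule smooth_linear[OF bl_eta])
  have h\<sigma>: "smooth (\<lambda>q. \<sigma> (?\<pi> q))" by (rule smooth_inner_comp[OF s\<sigma> bl_pi])
  have hd: "smooth (\<lambda>q. snd (fst q) - \<sigma> (?\<pi> q))"
    using smooth_outer[OF smooth_pair[OF h\<eta> h\<sigma>] bounded_linear_sub[OF bounded_linear_fst bounded_linear_snd]] by simp
  have hi: "smooth (\<lambda>q. (snd (fst q) - \<sigma> (?\<pi> q)) \<bullet> (snd (fst q) - \<sigma> (?\<pi> q)))"
    by (rule smooth_inner[OF hd hd])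
  have hs: "smooth (\<lambda>q. (\<gamma>s/2) * ((snd (fst q) - \<sigma> (?\<pi> q)) \<bullet> (snd (fst q) - \<sigma> (?\<pi> q))))"
    using smooth_outer[OF hi bounded_linear_mult_right[of "\<gamma>s/2"]] by simp
  have "smooth (\<lambda>q. V (?\<pi> q) + (\<gamma>s/2) * ((snd (fst q) - \<sigma> (?\<pi> q)) \<bullet> (snd (fst q) - \<sigma> (?\<pi> q))))"
    using smooth_outer[OF smooth_pair[OF h1 hs] bounded_linear_add[OF bounded_linear_fst bounded_linear_snd]] by simp
  then show ?thesis unfolding Vs_eq .
qed

lemma Vs_hasD:
  fixes V :: "(real^'n) \<times> (real^'r) \<Rightarrow> real" and \<sigma> :: "(real^'n) \<times> (real^'r) \<Rightarrow> real^'s"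
  assumes sV: "smooth V" and s\<sigma>: "smooth \<sigma>"
  shows "(V_s V \<sigma> \<gamma>s has_derivative (\<lambda>w. frechet_derivative V (at (fst (fst q), snd q)) (fst (fst w), snd w)
      + \<gamma>s * ((snd (fst q) - \<sigma> (fst (fst q), snd q)) \<bullet> (snd (fst w) - frechet_derivative \<sigma> (at (fst (fst q), snd q)) (fst (fst w), snd w))))) (at q)"
proof -
  let ?\<pi> = "\<lambda>q::((real^'n) \<times> (real^'s)) \<times> (real^'r). (fst (fst q), snd q)"
  let ?DV = "frechet_derivative V (at (?\<pi> q))"
  let ?D\<sigma> = "frechet_derivative \<sigma> (at (?\<pi> q))"
  have d\<pi>: "(?\<pi> has_derivative ?\<pi>) (at q)" by (rule bounded_linear_imp_has_derivative[OF bl_pi])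
  have d\<eta>: "((\<lambda>q::((real^'n) \<times> (real^'s)) \<times> (real^'r). snd (fst q)) has_derivative (\<lambda>q. snd (fst q))) (at q)"
    by (rule bounded_linear_imp_has_derivative[OF bl_eta])
  have d1: "((\<lambda>q. V (?\<pi> q)) has_derivative (\<lambda>w. ?DV (?\<pi> w))) (at q)"
    by (rule has_derivative_compose[OF d\<pi> smooth_hasD[OF sV]])
  have d2: "((\<lambda>q. \<sigma> (?\<pi> q)) has_derivative (\<lambda>w. ?D\<sigma> (?\<pi> w))) (at q)"
    by (rule has_derivative_compose[OF d\<pi> smooth_hasD[OF s\<sigma>]])
  have d3: "((\<lambda>q. snd (fst q) - \<sigma> (?\<pi> q)) has_derivative (\<lambda>w. snd (fst w) - ?D\<sigma> (?\<pi> w))) (at q)"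
    by (rule has_derivative_diff[OF d\<eta> d2])
  note d4 = has_derivative_inner[OF d3 d3]
  have d5: "((\<lambda>q. (\<gamma>s/2) * ((snd (fst q) - \<sigma> (?\<pi> q)) \<bullet> (snd (fst q) - \<sigma> (?\<pi> q)))) has_derivative
     (\<lambda>w. (\<gamma>s/2) * ((snd (fst q) - \<sigma> (?\<pi> q)) \<bullet> (snd (fst w) - ?D\<sigma> (?\<pi> w)) + (snd (fst w) - ?D\<sigma> (?\<pi> w)) \<bullet> (snd (fst q) - \<sigma> (?\<pi> q))))) (at q)"
    using bounded_linear.has_derivative[OF bounded_linear_mult_right[of "\<gamma>s/2"] d4] by simp
  note d6 = has_derivative_add[OF d1 d5]
  show ?thesis unfolding Vs_eq
    by (rule has_derivative_eq_rhs[OF d6]) (simp add: fun_eq_iff inner_commute algebra_simps)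
qed

lemma grad_x_inner:
  assumes "V differentiable (at (x,\<theta>))"
  shows "grad_x V x \<theta> \<bullet> w = frechet_derivative V (at (x,\<theta>)) (w, 0)"
proof -
  let ?D = "frechet_derivative V (at (x,\<theta>))"
  have lin: "linear ?D" by (rule linear_frechet_derivative[OF assms])
  have dP: "((\<lambda>y. (y, \<theta>)) has_derivative (\<lambda>h. (h, 0))) (at x)"
    by (rule has_derivative_Pair[OF has_derivative_ident has_derivative_const])
  have dV: "((\<lambda>y. V (y, \<theta>)) has_derivative (\<lambda>h. ?D (h, 0))) (at x)"
    using has_derivative_compose[OF dP, of V ?D] assms frechet_derivative_works by blast
  from dV have fd: "frechet_derivative (\<lambda>y. V (y, \<theta>)) (at x) = (\<lambda>h. ?D (h, 0))"
    by (rule frechet_derivative_at[symmetric])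
  have linL: "linear (\<lambda>h. ?D (h, 0))"
    by (rule has_derivative_linear[OF dV])
  have "?D (w, 0) = ?D ((\<Sum>i\<in>UNIV. w $ i *s axis i 1), 0)" by (simp add: basis_expansion)
  also have "\<dots> = (\<Sum>i\<in>UNIV. ?D (w $ i *s axis i 1, 0))"
    using linear_sum[OF linL, of "\<lambda>i. w $ i *s axis i 1" UNIV] by simp
  also have "\<dots> = (\<Sum>i\<in>UNIV. w $ i * ?D (axis i 1, 0))"
    using linear_scale[OF linL] by (simp add: scalar_mult_eq_scaleR)
  finally show ?thesis
    by (simp add: grad_x_def fd inner_vec_def mult.commute)
qed

lemma transpose_inner: "y \<bullet> (A *v z) = (transpose A *v y) \<bullet> (z::real^'a)"
  by (simp add: transpose_matrix_vector dot_lmul_matrix)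

lemma lie_Vs:
  fixes f :: "real^'n \<Rightarrow> real^'n"
    and g :: "real^'n \<Rightarrow> real^'m^'n"
    and \<omega> :: "(real^'n) \<times> (real^'r) \<Rightarrow> real^'r"
    and V :: "(real^'n) \<times> (real^'r) \<Rightarrow> real"
    and \<zeta> :: "real^'n \<Rightarrow> real^'m"
    and \<Upsilon> :: "real^'n \<Rightarrow> real^'s^'m"
    and \<sigma> :: "(real^'n) \<times> (real^'r) \<Rightarrow> real^'s"
  assumes sV: "smooth V" and s\<sigma>: "smooth \<sigma>" and g0: "\<gamma>s \<noteq> 0"
  shows "lie_W (V_s V \<sigma> \<gamma>s) (closed_loop (f_s f g \<omega> \<zeta> \<Upsilon>) g_s (kappa_s f g \<omega> \<zeta> \<Upsilon> \<sigma> V \<gamma>s k\<eta>)) ((x,\<eta>),\<theta>)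
     = lie_W V (closed_loop (f_c f \<omega>) (g_c g) (kappa_dec \<zeta> \<Upsilon> \<sigma>)) (x,\<theta>) - \<gamma>s * k\<eta> * (norm (\<eta> - \<sigma> (x,\<theta>)))\<^sup>2"
proof -
  define q where "q = ((x,\<eta>),\<theta>)"
  define a where "a = f x + g x *v kappa_bar \<zeta> \<Upsilon> x \<eta>"
  define c where "c = \<omega> (x,\<theta>)"
  define d where "d = \<eta> - \<sigma> (x,\<theta>)"
  define b where "b = f x + g x *v kappa_dec \<zeta> \<Upsilon> \<sigma> (x,\<theta>)"
  define U where "U = transpose (\<Upsilon> x) *v (transpose (g x) *v grad_x V x \<theta>)"
  define DV where "DV = frechet_derivative V (at (x,\<theta>))"
  define D\<sigma> where "D\<sigma> = frechet_derivative \<sigma> (at (x,\<theta>))"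
  define ks where "ks = kappa_s f g \<omega> \<zeta> \<Upsilon> \<sigma> V \<gamma>s k\<eta> q"
  have Fq: "closed_loop (f_s f g \<omega> \<zeta> \<Upsilon>) g_s (kappa_s f g \<omega> \<zeta> \<Upsilon> \<sigma> V \<gamma>s k\<eta>) q = ((a, ks), c)"
    by (simp add: closed_loop_def f_s_def g_s_def q_def a_def ks_def c_def)
  have ksq: "ks = - (k\<eta> *\<^sub>R d) + D\<sigma> (a, c) - (1 / \<gamma>s) *\<^sub>R U"
    by (simp add: ks_def kappa_s_def q_def d_def Dt_sigma_def D\<sigma>_def a_def c_def U_def)
  have fdVs: "frechet_derivative (V_s V \<sigma> \<gamma>s) (at q) = (\<lambda>w. DV (fst (fst w), snd w)
      + \<gamma>s * (d \<bullet> (snd (fst w) - D\<sigma> (fst (fst w), snd w))))"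
    using frechet_derivative_at[OF Vs_hasD[OF sV s\<sigma>, of \<gamma>s q]] by (simp add: q_def DV_def D\<sigma>_def d_def)
  have lhs: "lie_W (V_s V \<sigma> \<gamma>s) (closed_loop (f_s f g \<omega> \<zeta> \<Upsilon>) g_s (kappa_s f g \<omega> \<zeta> \<Upsilon> \<sigma> V \<gamma>s k\<eta>)) q
      = DV (a, c) + \<gamma>s * (d \<bullet> (ks - D\<sigma> (a, c)))"
    unfolding lie_W_def Fq fdVs by simp
  have Vdiff: "V differentiable (at (x,\<theta>))" by (rule smooth_diff[OF sV])
  have linDV: "linear DV" unfolding DV_def by (rule linear_frechet_derivative[OF Vdiff])
  have ab: "a = b + g x *v (\<Upsilon> x *v d)"
    by (simp add: a_def b_def d_def kappa_bar_def kappa_dec_def matrix_vector_right_distrib matrix_vector_mult_diff_distrib)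
  have "DV (a, c) = DV (b, c) + DV (g x *v (\<Upsilon> x *v d), 0)"
  proof -
    have "(a, c) = (b, c) + (g x *v (\<Upsilon> x *v d), 0)" by (simp add: ab)
    then have "DV (a, c) = DV ((b, c) + (g x *v (\<Upsilon> x *v d), 0))" by simp
    then show ?thesis by (simp only: linear_add[OF linDV])
  qed
  also have "DV (b, c) = lie_W V (closed_loop (f_c f \<omega>) (g_c g) (kappa_dec \<zeta> \<Upsilon> \<sigma>)) (x,\<theta>)"
    by (simp add: lie_W_def closed_loop_def f_c_def g_c_def DV_def b_def c_def)
  also have "DV (g x *v (\<Upsilon> x *v d), 0) = U \<bullet> d"
    unfolding DV_def grad_x_inner[OF Vdiff, symmetric] U_def
    by (simp add: transpose_inner)
  finally have e1: "DV (a, c) = lie_W V (closed_loop (f_c f \<omega>) (g_c g) (kappa_dec \<zeta> \<Upsilon> \<sigma>)) (x,\<theta>) + U \<bullet> d" .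
  have e2: "\<gamma>s * (d \<bullet> (ks - D\<sigma> (a, c))) = - (\<gamma>s * k\<eta> * (d \<bullet> d)) - U \<bullet> d"
    unfolding ksq using g0 by (simp add: inner_diff_right inner_add_right inner_commute algebra_simps)
  show ?thesis
    using lhs e1 e2 by (simp add: q_def d_def power2_norm_eq_inner)
qed

lemma proj_inv:
  fixes Fs :: "(('a::real_normed_vector \<times> 'b::real_normed_vector) \<times> 'c::real_normed_vector) \<Rightarrow> ('a \<times> 'b) \<times> 'c"
    and Fc :: "'a \<times> 'c \<Rightarrow> 'a \<times> 'c"
  assumes proj: "\<And>q. q \<in> S \<Longrightarrow> (fst (fst (Fs q)), snd (Fs q)) = Fc (fst (fst q), snd q)"
    and inv: "weakly_invariant ((X \<times> UNIV) \<times> UNIV) Fs S"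
  shows "weakly_invariant (X \<times> UNIV) Fc ((\<lambda>q. (fst (fst q), snd q)) ` S)"
proof -
  let ?\<pi> = "\<lambda>q::('a \<times> 'b) \<times> 'c. (fst (fst q), snd q)"
  have der: "((\<lambda>t. ?\<pi> (\<phi> t)) has_vector_derivative Fc (?\<pi> (\<phi> t))) (at t within I)"
    if "(\<phi> has_vector_derivative Fs (\<phi> t)) (at t within I)" "\<phi> t \<in> S" for \<phi> t I
  proof -
    have "((\<lambda>t. ?\<pi> (\<phi> t)) has_vector_derivative ?\<pi> (Fs (\<phi> t))) (at t within I)"
      by (rule bounded_linear.has_vector_derivative[OF bl_pi that(1)])
    then show ?thesis using proj[OF that(2)] by simp
  qed
  have inD: "?\<pi> p \<in> X \<times> UNIV" if "p \<in> (X \<times> UNIV) \<times> UNIV" for p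
    using that by auto
  have fwd: "weakly_forward_invariant (X \<times> UNIV) Fc (?\<pi> ` S)"
    unfolding weakly_forward_invariant_def
  proof
    fix \<xi> assume "\<xi> \<in> ?\<pi> ` S"
    then obtain q where q: "q \<in> S" "\<xi> = ?\<pi> q" by blast
    from inv q(1) obtain \<phi> where \<phi>: "\<phi> 0 = q" "complete_solution ((X \<times> UNIV) \<times> UNIV) Fs \<phi>" "\<forall>t\<in>{0..}. \<phi> t \<in> S"
      unfolding weakly_invariant_def weakly_forward_invariant_def by blast
    have "complete_solution (X \<times> UNIV) Fc (\<lambda>t. ?\<pi> (\<phi> t))"
      unfolding complete_solution_def
    proof
      fix t :: real assume t: "t \<in> {0..}"
      have h: "\<phi> t \<in> (X \<times> UNIV) \<times> UNIV \<and> (\<phi> has_vector_derivative Fs (\<phi> t)) (at t within {0..})"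
        by (rule bspec[OF \<phi>(2)[unfolded complete_solution_def] t])
      show "?\<pi> (\<phi> t) \<in> X \<times> UNIV \<and> ((\<lambda>t. ?\<pi> (\<phi> t)) has_vector_derivative Fc (?\<pi> (\<phi> t))) (at t within {0..})"
        by (rule conjI[OF inD[OF conjunct1[OF h]] der[OF conjunct2[OF h] bspec[OF \<phi>(3) t]]])
    qed
    moreover have "\<forall>t\<in>{0..}. ?\<pi> (\<phi> t) \<in> ?\<pi> ` S" using \<phi>(3) by blast
    ultimately show "\<exists>\<psi>. \<psi> 0 = \<xi> \<and> complete_solution (X \<times> UNIV) Fc \<psi> \<and> (\<forall>t\<in>{0..}. \<psi> t \<in> ?\<pi> ` S)"
      using \<phi>(1) q(2) by (intro exI[of _ "\<lambda>t. ?\<pi> (\<phi> t)"]) simp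
  qed
  have bwd: "weakly_backward_invariant (X \<times> UNIV) Fc (?\<pi> ` S)"
    unfolding weakly_backward_invariant_def
  proof (intro ballI allI impI)
    fix \<xi> and N :: real assume "\<xi> \<in> ?\<pi> ` S" "N > 0"
    then obtain q where q: "q \<in> S" "\<xi> = ?\<pi> q" by blast
    from inv q(1) \<open>N > 0\<close> obtain \<xi>0 \<phi> T where \<phi>: "\<xi>0 \<in> S" "\<phi> 0 = \<xi>0" "N \<le> T"
      "flow_solution_on ((X \<times> UNIV) \<times> UNIV) Fs \<phi> T" "\<phi> T = q" "\<forall>t\<in>{0..T}. \<phi> t \<in> S"
      unfolding weakly_invariant_def weakly_backward_invariant_def by meson
    have "flow_solution_on (X \<times> UNIV) Fc (\<lambda>t. ?\<pi> (\<phi> t)) T"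
      unfolding flow_solution_on_def
    proof
      show "0 \<le> T" using \<phi>(4) unfolding flow_solution_on_def by simp
      show "\<forall>t\<in>{0..T}. ?\<pi> (\<phi> t) \<in> X \<times> UNIV \<and> ((\<lambda>t. ?\<pi> (\<phi> t)) has_vector_derivative Fc (?\<pi> (\<phi> t))) (at t within {0..T})"
      proof
        fix t :: real assume t: "t \<in> {0..T}"
        have h: "\<phi> t \<in> (X \<times> UNIV) \<times> UNIV \<and> (\<phi> has_vector_derivative Fs (\<phi> t)) (at t within {0..T})"
          by (rule bspec[OF conjunct2[OF \<phi>(4)[unfolded flow_solution_on_def]] t])
        show "?\<pi> (\<phi> t) \<in> X \<times> UNIV \<and> ((\<lambda>t. ?\<pi> (\<phi> t)) has_vector_derivative Fc (?\<pi> (\<phi> t))) (at t within {0..T})"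
          by (rule conjI[OF inD[OF conjunct1[OF h]] der[OF conjunct2[OF h] bspec[OF \<phi>(6) t]]])
      qed
    qed
    moreover have "\<forall>t\<in>{0..T}. ?\<pi> (\<phi> t) \<in> ?\<pi> ` S" using \<phi>(6) by blast
    moreover have "?\<pi> \<xi>0 \<in> ?\<pi> ` S" using \<phi>(1) by blast
    ultimately show "\<exists>\<xi>0\<in>?\<pi> ` S. \<exists>\<psi> T. \<psi> 0 = \<xi>0 \<and> N \<le> T \<and> flow_solution_on (X \<times> UNIV) Fc \<psi> T \<and> \<psi> T = \<xi> \<and> (\<forall>t\<in>{0..T}. \<psi> t \<in> ?\<pi> ` S)"
      using \<phi>(2,3,5) q(2) by (intro bexI[of _ "?\<pi> \<xi>0"] exI[of _ "\<lambda>t. ?\<pi> (\<phi> t)"] exI[of _ T]) auto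
  qed
  show ?thesis unfolding weakly_invariant_def using fwd bwd by blast
qed

lemma smooth_cont: "smooth f \<Longrightarrow> continuous_on S f"
  by (intro continuous_at_imp_continuous_on ballI differentiable_imp_continuous_within smooth_diff)

lemma Vs_pt: "V_s V \<sigma> \<gamma>s ((x,\<eta>),\<theta>) = V (x,\<theta>) + \<gamma>s / 2 * (norm (\<eta> - \<sigma> (x,\<theta>)))\<^sup>2"
  by (simp add: V_s_def)

lemma compact_As:
  fixes \<sigma> :: "(real^'n) \<times> (real^'r) \<Rightarrow> real^'s"
  assumes "smooth \<sigma>" "compact A"
  shows "compact (A_s A \<sigma>)"
proof -
  let ?m = "\<lambda>p::(real^'n) \<times> (real^'r). ((fst p, \<sigma> p), snd p)"
  have c\<sigma>: "continuous_on A \<sigma>" by (rule smooth_cont[OF assms(1)])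
  have "continuous_on A ?m"
    by (intro continuous_on_Pair continuous_on_fst continuous_on_snd continuous_on_id c\<sigma>)
  then have "compact (?m ` A)" by (rule compact_continuous_image[OF _ assms(2)])
  moreover have "A_s A \<sigma> = ?m ` A"
  proof
    show "A_s A \<sigma> \<subseteq> ?m ` A"
    proof
      fix q assume "q \<in> A_s A \<sigma>"
      then obtain x \<eta> \<theta> where "q = ((x,\<eta>),\<theta>)" "(x,\<theta>) \<in> A" "\<eta> = \<sigma> (x,\<theta>)"
        unfolding A_s_def by blast
      then show "q \<in> ?m ` A" by (intro image_eqI[of _ _ "(x,\<theta>)"]) auto
    qed
    show "?m ` A \<subseteq> A_s A \<sigma>" unfolding A_s_def by auto
  qed
  ultimately show ?thesis by simp
qed

lemma compact_sub:
  fixes V :: "(real^'n) \<times> (real^'r) \<Rightarrow> real" and \<sigma> :: "(real^'n) \<times> (real^'r) \<Rightarrow> real^'s"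
  assumes sV: "smooth V" and s\<sigma>: "smooth \<sigma>" and cX: "closed X" and g: "\<gamma>s > 0"
    and nn: "\<forall>p\<in>X \<times> UNIV. 0 \<le> V p" and cK: "compact {p \<in> X \<times> UNIV. V p \<le> \<epsilon>}" and e: "\<epsilon> \<ge> 0"
  shows "compact {p \<in> (X \<times> (UNIV::(real^'s) set)) \<times> UNIV. V_s V \<sigma> \<gamma>s p \<le> \<epsilon>}"
proof -
  let ?K = "{p \<in> X \<times> UNIV. V p \<le> \<epsilon>}"
  let ?R = "sqrt (2 * \<epsilon> / \<gamma>s)"
  let ?m = "\<lambda>pe::((real^'n) \<times> (real^'r)) \<times> (real^'s). ((fst (fst pe), \<sigma> (fst pe) + snd pe), snd (fst pe))"
  let ?S = "{p \<in> (X \<times> (UNIV::(real^'s) set)) \<times> UNIV. V_s V \<sigma> \<gamma>s p \<le> \<epsilon>}"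
  have c\<sigma>: "continuous_on (?K \<times> cball 0 ?R) (\<lambda>pe. \<sigma> (fst pe))"
    by (rule continuous_on_compose2[OF smooth_cont[OF s\<sigma>] continuous_on_fst[OF continuous_on_id]]) auto
  have "continuous_on (?K \<times> cball 0 ?R) ?m"
    by (intro continuous_on_Pair continuous_on_fst continuous_on_snd continuous_on_id continuous_on_add c\<sigma>)
  then have cC: "compact (?m ` (?K \<times> cball 0 ?R))"
    by (rule compact_continuous_image[OF _ compact_Times[OF cK compact_cball]])
  have sub: "?S \<subseteq> ?m ` (?K \<times> cball 0 ?R)"
  proof
    fix q assume q: "q \<in> ?S"
    obtain x \<eta> \<theta> where qe: "q = ((x,\<eta>),\<theta>)" by (metis prod.collapse)
    have xX: "x \<in> X" using q qe by auto
    have le: "V (x,\<theta>) + \<gamma>s / 2 * (norm (\<eta> - \<sigma> (x,\<theta>)))\<^sup>2 \<le> \<epsilon>"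
      using q qe Vs_pt[of V \<sigma> \<gamma>s x \<eta> \<theta>] by simp
    have V0: "0 \<le> V (x,\<theta>)" using nn xX by auto
    have n0: "0 \<le> \<gamma>s / 2 * (norm (\<eta> - \<sigma> (x,\<theta>)))\<^sup>2" using g by simp
    have "V (x,\<theta>) \<le> \<epsilon>" using le n0 by linarith
    then have inK: "(x,\<theta>) \<in> ?K" using xX by simp
    have "\<gamma>s / 2 * (norm (\<eta> - \<sigma> (x,\<theta>)))\<^sup>2 \<le> \<epsilon>" using le V0 by linarith
    then have "(norm (\<eta> - \<sigma> (x,\<theta>)))\<^sup>2 \<le> 2 * \<epsilon> / \<gamma>s" using g by (simp add: field_simps)
    then have "norm (\<eta> - \<sigma> (x,\<theta>)) \<le> ?R" by (rule real_le_rsqrt)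
    then have inB: "\<eta> - \<sigma> (x,\<theta>) \<in> cball 0 ?R" by (simp add: dist_norm norm_minus_commute)
    show "q \<in> ?m ` (?K \<times> cball 0 ?R)"
      using inK inB qe by (intro image_eqI[of _ _ "((x,\<theta>), \<eta> - \<sigma> (x,\<theta>))"]) auto
  qed
  have cVs: "continuous_on UNIV (V_s V \<sigma> \<gamma>s)" by (rule smooth_cont[OF smooth_Vs[OF sV s\<sigma>]])
  have cl: "closed {p. V_s V \<sigma> \<gamma>s p \<le> \<epsilon>}"
    by (rule closed_Collect_le[OF cVs continuous_on_const])
  have clD: "closed ((X \<times> (UNIV::(real^'s) set)) \<times> (UNIV::(real^'r) set))"
    by (intro closed_Times cX closed_UNIV)
  have eqS: "?S = ?m ` (?K \<times> cball 0 ?R) \<inter> (((X \<times> UNIV) \<times> UNIV) \<inter> {p. V_s V \<sigma> \<gamma>s p \<le> \<epsilon>})"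
    using sub by blast
  show ?thesis unfolding eqS
    by (rule compact_Int_closed[OF cC closed_Int[OF clD cl]])
qed

theorem proposition1:
  fixes X :: "(real^'n) set"
    and f :: "real^'n \<Rightarrow> real^'n"
    and g :: "real^'n \<Rightarrow> real^'m^'n"
    and \<Theta> :: "(real^'r) set"
    and \<omega> :: "(real^'n) \<times> (real^'r) \<Rightarrow> real^'r"
    and V :: "(real^'n) \<times> (real^'r) \<Rightarrow> real"
    and A :: "((real^'n) \<times> (real^'r)) set"
    and \<delta> :: real
    and \<zeta> :: "real^'n \<Rightarrow> real^'m"
    and \<Upsilon> :: "real^'n \<Rightarrow> real^'s^'m"
    and \<sigma> :: "(real^'n) \<times> (real^'r) \<Rightarrow> real^'s"
    and c\<kappa> \<gamma>s k\<eta> :: real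
  assumes "closed X" and "X \<noteq> {}"
    and "smooth f" and "smooth g"
    and "finite \<Theta>" and "\<Theta> \<noteq> {}"
    and "smooth \<omega>"
    and "smooth \<zeta>" and "smooth \<Upsilon>" and "smooth \<sigma>"
    and "0 < \<delta>"
    and quad: "synergistic_quadruple X (f_c f \<omega>) (g_c g) V (kappa_dec \<zeta> \<Upsilon> \<sigma>) \<Theta> A \<delta>"
    and "0 < c\<kappa>"
    and assm1: "\<forall>p \<in> Psi_W X (f_c f \<omega>) (g_c g) V (kappa_dec \<zeta> \<Upsilon> \<sigma>) - A.
                  Max ((\<lambda>\<theta>b. (norm (\<sigma> p - \<sigma> (fst p, \<theta>b)))\<^sup>2) ` \<Theta>) \<le> 2 * c\<kappa>"
    and "0 < \<gamma>s" and "\<gamma>s < \<delta> / c\<kappa>"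
    and "0 < k\<eta>"
  shows "\<forall>\<delta>s. 0 < \<delta>s \<and> \<delta>s \<le> \<delta> - \<gamma>s * c\<kappa> \<longrightarrow>
           synergistic_quadruple (X \<times> UNIV) (f_s f g \<omega> \<zeta> \<Upsilon>) g_s (V_s V \<sigma> \<gamma>s)
             (kappa_s f g \<omega> \<zeta> \<Upsilon> \<sigma> V \<gamma>s k\<eta>) \<Theta> (A_s A \<sigma>) \<delta>s"
proof (intro allI impI)
  fix \<delta>s assume h\<delta>: "0 < \<delta>s \<and> \<delta>s \<le> \<delta> - \<gamma>s * c\<kappa>"
  note Q = quad[unfolded synergistic_quadruple_def]
  have sV: "smooth V" using Q by blast
  have nnV: "\<forall>p\<in>X \<times> UNIV. 0 \<le> V p" using Q by blast
  have cA: "compact A" using Q by blast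
  have C1: "\<forall>\<epsilon>\<ge>0. compact {p \<in> X \<times> UNIV. V p \<le> \<epsilon>}" using Q by blast
  have AX: "A \<subseteq> X \<times> UNIV" using Q by blast
  have C2: "\<forall>p\<in>X \<times> UNIV. V p = 0 \<longleftrightarrow> p \<in> A" using Q by blast
  have C3: "\<forall>p\<in>X \<times> UNIV. lie_W V (closed_loop (f_c f \<omega>) (g_c g) (kappa_dec \<zeta> \<Upsilon> \<sigma>)) p \<le> 0" using Q by blast
  have C4: "\<exists>c>\<delta>. \<forall>p\<in>Psi_W X (f_c f \<omega>) (g_c g) V (kappa_dec \<zeta> \<Upsilon> \<sigma>) - A. c \<le> mu_W V \<Theta> p" using Q by blast
  have s\<sigma>: "smooth \<sigma>" by fact
  have g0: "\<gamma>s > 0" by fact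
  have k0: "k\<eta> > 0" by fact
  have lie: "lie_W (V_s V \<sigma> \<gamma>s) (closed_loop (f_s f g \<omega> \<zeta> \<Upsilon>) g_s (kappa_s f g \<omega> \<zeta> \<Upsilon> \<sigma> V \<gamma>s k\<eta>)) ((x,\<eta>),\<theta>)
     = lie_W V (closed_loop (f_c f \<omega>) (g_c g) (kappa_dec \<zeta> \<Upsilon> \<sigma>)) (x,\<theta>) - \<gamma>s * k\<eta> * (norm (\<eta> - \<sigma> (x,\<theta>)))\<^sup>2" for x \<eta> \<theta>
    by (rule lie_Vs[OF sV s\<sigma>]) (use g0 in simp)
  have lieneg: "lie_W (V_s V \<sigma> \<gamma>s) (closed_loop (f_s f g \<omega> \<zeta> \<Upsilon>) g_s (kappa_s f g \<omega> \<zeta> \<Upsilon> \<sigma> V \<gamma>s k\<eta>)) ((x,\<eta>),\<theta>) \<le> 0"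
    if "x \<in> X" for x \<eta> \<theta>
  proof -
    have "lie_W V (closed_loop (f_c f \<omega>) (g_c g) (kappa_dec \<zeta> \<Upsilon> \<sigma>)) (x,\<theta>) \<le> 0" using C3 that by simp
    moreover have "0 \<le> \<gamma>s * k\<eta> * (norm (\<eta> - \<sigma> (x,\<theta>)))\<^sup>2" using g0 k0 by simp
    ultimately show ?thesis unfolding lie by linarith
  qed
  have Echar: "\<eta> = \<sigma> (x,\<theta>) \<and> lie_W V (closed_loop (f_c f \<omega>) (g_c g) (kappa_dec \<zeta> \<Upsilon> \<sigma>)) (x,\<theta>) = 0"
    if "x \<in> X" "lie_W (V_s V \<sigma> \<gamma>s) (closed_loop (f_s f g \<omega> \<zeta> \<Upsilon>) g_s (kappa_s f g \<omega> \<zeta> \<Upsilon> \<sigma> V \<gamma>s k\<eta>)) ((x,\<eta>),\<theta>) = 0"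
    for x \<eta> \<theta>
  proof -
    have L0: "lie_W V (closed_loop (f_c f \<omega>) (g_c g) (kappa_dec \<zeta> \<Upsilon> \<sigma>)) (x,\<theta>) \<le> 0" using C3 that(1) by simp
    have N0: "0 \<le> \<gamma>s * k\<eta> * (norm (\<eta> - \<sigma> (x,\<theta>)))\<^sup>2" using g0 k0 by simp
    have sum0: "lie_W V (closed_loop (f_c f \<omega>) (g_c g) (kappa_dec \<zeta> \<Upsilon> \<sigma>)) (x,\<theta>) - \<gamma>s * k\<eta> * (norm (\<eta> - \<sigma> (x,\<theta>)))\<^sup>2 = 0"
      using that(2) unfolding lie .
    have "\<gamma>s * k\<eta> * (norm (\<eta> - \<sigma> (x,\<theta>)))\<^sup>2 = 0" using L0 N0 sum0 by linarith
    then have "norm (\<eta> - \<sigma> (x,\<theta>)) = 0" using g0 k0 by simp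
    then show ?thesis using L0 N0 sum0 by simp
  qed
  show "synergistic_quadruple (X \<times> UNIV) (f_s f g \<omega> \<zeta> \<Upsilon>) g_s (V_s V \<sigma> \<gamma>s)
             (kappa_s f g \<omega> \<zeta> \<Upsilon> \<sigma> V \<gamma>s k\<eta>) \<Theta> (A_s A \<sigma>) \<delta>s"
    unfolding synergistic_quadruple_def
  proof (intro conjI)
    show "smooth (V_s V \<sigma> \<gamma>s)" by (rule smooth_Vs[OF sV s\<sigma>])
    show "\<forall>p\<in>(X \<times> UNIV) \<times> UNIV. 0 \<le> V_s V \<sigma> \<gamma>s p"
    proof
      fix p :: "((real^'n) \<times> (real^'s)) \<times> (real^'r)" assume p: "p \<in> (X \<times> UNIV) \<times> UNIV"
      obtain x \<eta> \<theta> where pe: "p = ((x,\<eta>),\<theta>)" by (metis prod.collapse)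
      have "0 \<le> V (x,\<theta>)" using nnV p pe by auto
      moreover have "0 \<le> \<gamma>s / 2 * (norm (\<eta> - \<sigma> (x,\<theta>)))\<^sup>2" using g0 by simp
      ultimately show "0 \<le> V_s V \<sigma> \<gamma>s p" unfolding pe Vs_pt by linarith
    qed
    show "compact (A_s A \<sigma>)" by (rule compact_As[OF s\<sigma> cA])
    show "\<forall>\<epsilon>\<ge>0. compact {p \<in> (X \<times> UNIV) \<times> UNIV. V_s V \<sigma> \<gamma>s p \<le> \<epsilon>}"
    proof (intro allI impI)
      fix \<epsilon> :: real assume e: "0 \<le> \<epsilon>"
      show "compact {p \<in> (X \<times> UNIV) \<times> UNIV. V_s V \<sigma> \<gamma>s p \<le> \<epsilon>}"
        by (rule compact_sub[OF sV s\<sigma> \<open>closed X\<close> g0 nnV _ e]) (use C1 e in blast)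
    qed
    show "A_s A \<sigma> \<subseteq> (X \<times> UNIV) \<times> UNIV"
      using AX unfolding A_s_def by auto
    show "\<forall>p\<in>(X \<times> UNIV) \<times> UNIV. V_s V \<sigma> \<gamma>s p = 0 \<longleftrightarrow> p \<in> A_s A \<sigma>"
    proof
      fix p :: "((real^'n) \<times> (real^'s)) \<times> (real^'r)" assume p: "p \<in> (X \<times> UNIV) \<times> UNIV"
      obtain x \<eta> \<theta> where pe: "p = ((x,\<eta>),\<theta>)" by (metis prod.collapse)
      have xX: "(x,\<theta>) \<in> X \<times> UNIV" using p pe by auto
      have V0: "0 \<le> V (x,\<theta>)" using nnV xX by blast
      have N0: "0 \<le> \<gamma>s / 2 * (norm (\<eta> - \<sigma> (x,\<theta>)))\<^sup>2" using g0 by simp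
      have iffA: "V (x,\<theta>) = 0 \<longleftrightarrow> (x,\<theta>) \<in> A" using C2 xX by blast
      have "V_s V \<sigma> \<gamma>s p = 0 \<longleftrightarrow> V (x,\<theta>) = 0 \<and> \<gamma>s / 2 * (norm (\<eta> - \<sigma> (x,\<theta>)))\<^sup>2 = 0"
        unfolding pe Vs_pt using V0 N0 by linarith
      also have "\<dots> \<longleftrightarrow> (x,\<theta>) \<in> A \<and> \<eta> = \<sigma> (x,\<theta>)" using g0 iffA by simp
      also have "\<dots> \<longleftrightarrow> p \<in> A_s A \<sigma>" unfolding pe A_s_def by simp
      finally show "V_s V \<sigma> \<gamma>s p = 0 \<longleftrightarrow> p \<in> A_s A \<sigma>" .
    qed
    show "\<forall>p\<in>(X \<times> UNIV) \<times> UNIV. lie_W (V_s V \<sigma> \<gamma>s) (closed_loop (f_s f g \<omega> \<zeta> \<Upsilon>) g_s (kappa_s f g \<omega> \<zeta> \<Upsilon> \<sigma> V \<gamma>s k\<eta>)) p \<le> 0"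
    proof
      fix p :: "((real^'n) \<times> (real^'s)) \<times> (real^'r)" assume p: "p \<in> (X \<times> UNIV) \<times> UNIV"
      obtain x \<eta> \<theta> where pe: "p = ((x,\<eta>),\<theta>)" by (metis prod.collapse)
      have "x \<in> X" using p pe by auto
      then show "lie_W (V_s V \<sigma> \<gamma>s) (closed_loop (f_s f g \<omega> \<zeta> \<Upsilon>) g_s (kappa_s f g \<omega> \<zeta> \<Upsilon> \<sigma> V \<gamma>s k\<eta>)) p \<le> 0"
        unfolding pe by (rule lieneg)
    qed
    obtain c where c: "c > \<delta>" "\<forall>p\<in>Psi_W X (f_c f \<omega>) (g_c g) V (kappa_dec \<zeta> \<Upsilon> \<sigma>) - A. c \<le> mu_W V \<Theta> p"
      using C4 by blast
    show "\<exists>c'>\<delta>s. \<forall>p\<in>Psi_W (X \<times> UNIV) (f_s f g \<omega> \<zeta> \<Upsilon>) g_s (V_s V \<sigma> \<gamma>s) (kappa_s f g \<omega> \<zeta> \<Upsilon> \<sigma> V \<gamma>s k\<eta>) - A_s A \<sigma>.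
        c' \<le> mu_W (V_s V \<sigma> \<gamma>s) \<Theta> p"
    proof (intro exI[of _ "c - \<gamma>s * c\<kappa>"] conjI ballI)
      show "\<delta>s < c - \<gamma>s * c\<kappa>" using c(1) h\<delta> by linarith
      fix p assume p: "p \<in> Psi_W (X \<times> UNIV) (f_s f g \<omega> \<zeta> \<Upsilon>) g_s (V_s V \<sigma> \<gamma>s) (kappa_s f g \<omega> \<zeta> \<Upsilon> \<sigma> V \<gamma>s k\<eta>) - A_s A \<sigma>"
      then obtain S where S: "p \<in> S" "S \<subseteq> E_W (X \<times> UNIV) (f_s f g \<omega> \<zeta> \<Upsilon>) g_s (V_s V \<sigma> \<gamma>s) (kappa_s f g \<omega> \<zeta> \<Upsilon> \<sigma> V \<gamma>s k\<eta>)"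
        "weakly_invariant ((X \<times> UNIV) \<times> UNIV) (closed_loop (f_s f g \<omega> \<zeta> \<Upsilon>) g_s (kappa_s f g \<omega> \<zeta> \<Upsilon> \<sigma> V \<gamma>s k\<eta>)) S"
        unfolding Psi_W_def by blast
      have Sq: "snd (fst q) = \<sigma> (fst (fst q), snd q) \<and> (fst (fst q), snd q) \<in> E_W X (f_c f \<omega>) (g_c g) V (kappa_dec \<zeta> \<Upsilon> \<sigma>)"
        if "q \<in> S" for q
      proof -
        obtain x \<eta> \<theta> where qe: "q = ((x,\<eta>),\<theta>)" by (metis prod.collapse)
        have "q \<in> E_W (X \<times> UNIV) (f_s f g \<omega> \<zeta> \<Upsilon>) g_s (V_s V \<sigma> \<gamma>s) (kappa_s f g \<omega> \<zeta> \<Upsilon> \<sigma> V \<gamma>s k\<eta>)"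
          using S(2) that by blast
        then have xX: "x \<in> X" and l0: "lie_W (V_s V \<sigma> \<gamma>s) (closed_loop (f_s f g \<omega> \<zeta> \<Upsilon>) g_s (kappa_s f g \<omega> \<zeta> \<Upsilon> \<sigma> V \<gamma>s k\<eta>)) ((x,\<eta>),\<theta>) = 0"
          unfolding E_W_def qe by auto
        have "\<eta> = \<sigma> (x,\<theta>) \<and> lie_W V (closed_loop (f_c f \<omega>) (g_c g) (kappa_dec \<zeta> \<Upsilon> \<sigma>)) (x,\<theta>) = 0"
          by (rule Echar[OF xX l0])
        then show ?thesis using xX unfolding qe E_W_def by simp
      qed
      have proj: "(fst (fst (closed_loop (f_s f g \<omega> \<zeta> \<Upsilon>) g_s (kappa_s f g \<omega> \<zeta> \<Upsilon> \<sigma> V \<gamma>s k\<eta>) q)),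
                   snd (closed_loop (f_s f g \<omega> \<zeta> \<Upsilon>) g_s (kappa_s f g \<omega> \<zeta> \<Upsilon> \<sigma> V \<gamma>s k\<eta>) q))
                = closed_loop (f_c f \<omega>) (g_c g) (kappa_dec \<zeta> \<Upsilon> \<sigma>) (fst (fst q), snd q)"
        if "q \<in> S" for q
      proof -
        obtain x \<eta> \<theta> where qe: "q = ((x,\<eta>),\<theta>)" by (metis prod.collapse)
        have "\<eta> = \<sigma> (x,\<theta>)" using Sq[OF that] qe by simp
        then show ?thesis unfolding qe
          by (simp add: closed_loop_def f_s_def g_s_def f_c_def g_c_def kappa_bar_def kappa_dec_def)
      qed
      have winv: "weakly_invariant (X \<times> UNIV) (closed_loop (f_c f \<omega>) (g_c g) (kappa_dec \<zeta> \<Upsilon> \<sigma>)) ((\<lambda>q. (fst (fst q), snd q)) ` S)"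
        by (rule proj_inv[OF proj S(3)])
      have subE: "(\<lambda>q. (fst (fst q), snd q)) ` S \<subseteq> E_W X (f_c f \<omega>) (g_c g) V (kappa_dec \<zeta> \<Upsilon> \<sigma>)"
        using Sq by blast
      obtain x \<eta> \<theta> where pe: "p = ((x,\<eta>),\<theta>)" by (metis prod.collapse)
      have \<eta>e: "\<eta> = \<sigma> (x,\<theta>)" using Sq[OF S(1)] pe by simp
      have inPsi: "(x,\<theta>) \<in> Psi_W X (f_c f \<omega>) (g_c g) V (kappa_dec \<zeta> \<Upsilon> \<sigma>)"
      proof -
        have "(x,\<theta>) \<in> (\<lambda>q. (fst (fst q), snd q)) ` S" using S(1) pe by force
        then show ?thesis unfolding Psi_W_def using subE winv by blast
      qed
      have notA: "(x,\<theta>) \<notin> A"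
      proof
        assume "(x,\<theta>) \<in> A"
        then have "p \<in> A_s A \<sigma>" unfolding pe A_s_def using \<eta>e by simp
        then show False using p by blast
      qed
      have cmu: "c \<le> mu_W V \<Theta> (x,\<theta>)" using c(2) inPsi notA by blast
      have mx: "Max ((\<lambda>\<theta>b. (norm (\<sigma> (x,\<theta>) - \<sigma> (x, \<theta>b)))\<^sup>2) ` \<Theta>) \<le> 2 * c\<kappa>"
        using assm1 inPsi notA by force
      have fin: "finite ((\<lambda>\<theta>b. V (x, \<theta>b)) ` \<Theta>)" using \<open>finite \<Theta>\<close> by simp
      have ne: "(\<lambda>\<theta>b. V (x, \<theta>b)) ` \<Theta> \<noteq> {}" using \<open>\<Theta> \<noteq> {}\<close> by simp
      obtain \<theta>s where \<theta>s: "\<theta>s \<in> \<Theta>" "V (x, \<theta>s) = Min ((\<lambda>\<theta>b. V (x, \<theta>b)) ` \<Theta>)"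
        using Min_in[OF fin ne] by auto
      have nb: "(norm (\<sigma> (x,\<theta>) - \<sigma> (x, \<theta>s)))\<^sup>2 \<le> 2 * c\<kappa>"
      proof -
        have "(norm (\<sigma> (x,\<theta>) - \<sigma> (x, \<theta>s)))\<^sup>2 \<le> Max ((\<lambda>\<theta>b. (norm (\<sigma> (x,\<theta>) - \<sigma> (x, \<theta>b)))\<^sup>2) ` \<Theta>)"
          using \<theta>s(1) \<open>finite \<Theta>\<close> by (intro Max_ge) auto
        then show ?thesis using mx by linarith
      qed
      have minle: "Min ((\<lambda>\<theta>b. V_s V \<sigma> \<gamma>s (fst p, \<theta>b)) ` \<Theta>) \<le> V_s V \<sigma> \<gamma>s (fst p, \<theta>s)"
        using \<theta>s(1) \<open>finite \<Theta>\<close> by (intro Min_le) auto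
      have vs\<theta>s: "V_s V \<sigma> \<gamma>s (fst p, \<theta>s) = V (x, \<theta>s) + \<gamma>s / 2 * (norm (\<sigma> (x,\<theta>) - \<sigma> (x, \<theta>s)))\<^sup>2"
        unfolding pe \<eta>e by (simp add: Vs_pt)
      have "\<gamma>s / 2 * (norm (\<sigma> (x,\<theta>) - \<sigma> (x, \<theta>s)))\<^sup>2 \<le> \<gamma>s / 2 * (2 * c\<kappa>)"
        using nb g0 by (intro mult_left_mono) auto
      then have vs\<theta>s2: "V_s V \<sigma> \<gamma>s (fst p, \<theta>s) \<le> V (x, \<theta>s) + \<gamma>s * c\<kappa>"
        unfolding vs\<theta>s by simp
      have vsp: "V_s V \<sigma> \<gamma>s p = V (x,\<theta>)" unfolding pe \<eta>e by (simp add: Vs_pt)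
      have muV: "mu_W V \<Theta> (x,\<theta>) = V (x,\<theta>) - V (x, \<theta>s)" unfolding mu_W_def using \<theta>s(2) by simp
      have "mu_W (V_s V \<sigma> \<gamma>s) \<Theta> p = V_s V \<sigma> \<gamma>s p - Min ((\<lambda>\<theta>b. V_s V \<sigma> \<gamma>s (fst p, \<theta>b)) ` \<Theta>)"
        unfolding mu_W_def by simp
      then show "c - \<gamma>s * c\<kappa> \<le> mu_W (V_s V \<sigma> \<gamma>s) \<Theta> p"
        using minle vs\<theta>s2 vsp muV cmu by linarith
    qed
  qed
qed

end
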